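(* Under the Rician noise model below with $\sigma>0$ known, the Fisher information matrix with respect to the parameter $D\in\mathbb R^6$ at $D^0$, based on the data $\{S_b:b\in\mathcal B\}$, is $$\mathcal I(D^0;\sigma)=\sum_{b\in\mathcal B}\mathfrak I(\overline S_b;\sigma)\,\overline S_b^2\,x_bx_b^T,$$ where $\mathfrak I(\zeta;\sigma)$, the Fisher information for the parameter $\zeta$ of the Rician density $p_{\zeta,\sigma}$, equals $$\mathfrak I(\zeta;\sigma)=\frac1{\sigma^2}\Big[e^{-\zeta^2/(2\sigma^2)}V\Big(\frac{\zeta}{\sigma}\Big)-\frac{\zeta^2}{\sigma^2}\Big],\qquad V(w)=\int_0^\infty u^3\frac{(I_1(uw))^2}{I_0(uw)}e^{-u^2/2}\,du=\frac1{w^4}\int_0^\infty v^3\frac{(I_1(v))^2}{I_0(v)}e^{-v^2/(2w^2)}\,dv\quad(w>0).$$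
   Context: $I_0,I_1$ are the modified Bessel functions of the first kind of orders $0$ and $1$. The Rician density with signal parameter $\zeta\ge0$ and noise parameter $\sigma>0$ is $p_{\zeta,\sigma}(x)=\frac{x}{\sigma^2}\exp\!\big(-\frac{x^2+\zeta^2}{2\sigma^2}\big)I_0\!\big(\frac{x\zeta}{\sigma^2}\big)\mathbf 1(x>0)$. Model: $S_0>0$ known; $\mathcal B$ a finite set of unit vectors $b=(b_1,b_2,b_3)^T\in\mathbb R^3$; $D\in\mathbb R^6$ identified with a symmetric $3\times3$ matrix via $(D_{11},D_{22},D_{33},D_{12},D_{13},D_{23})$; $x_b=(b_1^2,b_2^2,b_3^2,2b_1b_2,2b_1b_3,2b_2b_3)^T$; $\zeta(D,b)=S_0\exp(-x_b^TD)$; the observations $S_b$, $b\in\mathcal B$, are independent with $S_b$ having density $p_{\zeta(D,b),\sigma}$ (equivalently $S_b=\|\zeta(D,b)u_b+\sigma\varepsilon_b\|$ with $u_b\in\mathbb R^2$ unit and $\varepsilon_b\sim N(0,I_2)$ independent); $D^0$ is the true parameter and $\overline S_b=\zeta(D^0,b)$. *)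

theory Defs
  imports "HOL-Analysis.Analysis"
begin

definition besselI :: "nat \<Rightarrow> real \<Rightarrow> real" where
  "besselI nu x = (\<Sum>k. (x / 2) ^ (2 * k + nu) / (fact k * fact (k + nu)))"

definition rice_pdf :: "real \<Rightarrow> real \<Rightarrow> real \<Rightarrow> real" where
  "rice_pdf zt sg x =
     (if x > 0 then x / sg\<^sup>2 * exp (- (x\<^sup>2 + zt\<^sup>2) / (2 * sg\<^sup>2))
                    * besselI 0 (x * zt / sg\<^sup>2) else 0)"

definition rice_fisher :: "real \<Rightarrow> real \<Rightarrow> real" where
  "rice_fisher zt sg =
     (\<integral>x. (deriv (\<lambda>z. ln (rice_pdf z sg x)) zt)\<^sup>2 * rice_pdf zt sg x \<partial>lborel)"

text \<open>Design vector x_b = (b1^2, b2^2, b3^2, 2 b1 b2, 2 b1 b3, 2 b2 b3); D coordinates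
  (D11, D22, D33, D12, D13, D23) in the same order.\<close>
definition xvec :: "real ^ 3 \<Rightarrow> real ^ 6" where
  "xvec b = vector [(b$1)\<^sup>2, (b$2)\<^sup>2, (b$3)\<^sup>2, 2 * b$1 * b$2, 2 * b$1 * b$3, 2 * b$2 * b$3]"

definition zeta :: "real \<Rightarrow> real ^ 6 \<Rightarrow> real ^ 3 \<Rightarrow> real" where
  "zeta S0 D b = S0 * exp (- (xvec b \<bullet> D))"

definition joint_pdf :: "real \<Rightarrow> real \<Rightarrow> (real ^ 3) set \<Rightarrow> real ^ 6 \<Rightarrow> (real ^ 3 \<Rightarrow> real) \<Rightarrow> real" where
  "joint_pdf S0 sg B D s = (\<Prod>b\<in>B. rice_pdf (zeta S0 D b) sg (s b))"

definition score :: "real \<Rightarrow> real \<Rightarrow> (real ^ 3) set \<Rightarrow> real ^ 6 \<Rightarrow> 6 \<Rightarrow> (real ^ 3 \<Rightarrow> real) \<Rightarrow> real" where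
  "score S0 sg B D i s = deriv (\<lambda>t. ln (joint_pdf S0 sg B (D + t *\<^sub>R axis i 1) s)) 0"

definition fisher_matrix :: "real \<Rightarrow> real \<Rightarrow> (real ^ 3) set \<Rightarrow> real ^ 6 \<Rightarrow> real ^ 6 ^ 6" where
  "fisher_matrix S0 sg B D = (\<chi> i j.
     \<integral>s. score S0 sg B D i s * score S0 sg B D j s * joint_pdf S0 sg B D s
       \<partial>(PiM B (\<lambda>_. lborel)))"

definition outer :: "real ^ 6 \<Rightarrow> real ^ 6 ^ 6" where
  "outer v = (\<chi> i j. v $ i * v $ j)"

definition Vfun :: "real \<Rightarrow> real" where
  "Vfun w = (LBINT u:{0<..}. u ^ 3 * (besselI 1 (u * w))\<^sup>2 / besselI 0 (u * w) * exp (- u\<^sup>2 / 2))"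

end

theory Submission
  imports Defs "HOL-Probability.Probability"
begin


definition bc :: "nat \<Rightarrow> nat \<Rightarrow> real" where
  "bc nu k = 1 / (fact k * fact (k + nu))"

definition bF :: "nat \<Rightarrow> real \<Rightarrow> real" where
  "bF nu w = (\<Sum>k. bc nu k * w ^ k)"

lemma bc_nonneg: "0 \<le> bc nu k" by (simp add: bc_def)

lemma bF_summable: "summable (\<lambda>k. bc nu k * w ^ k)"
proof (rule summable_comparison_test[OF _ summable_exp[of "\<bar>w\<bar>"]])
  show "\<exists>N. \<forall>n\<ge>N. norm (bc nu n * w ^ n) \<le> inverse (fact n) * \<bar>w\<bar> ^ n"
  proof (intro exI allI impI)
    fix n :: nat
    have "fact (n+nu) \<ge> (1::real)" by simp
    hence "bc nu n \<le> inverse (fact n)" unfolding bc_def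
      by (simp add: divide_simps)
    moreover have "bc nu n \<ge> 0" by (simp add: bc_def)
    ultimately show "norm (bc nu n * w ^ n) \<le> inverse (fact n) * \<bar>w\<bar> ^ n"
      by (simp add: abs_mult power_abs mult_right_mono)
  qed
qed

lemma besselI_bF: "besselI nu x = (x/2)^nu * bF nu ((x/2)^2)"
proof -
  have "besselI nu x = (\<Sum>k. (x/2)^nu * (bc nu k * ((x/2)^2) ^ k))"
  proof -
    have e: "\<And>k. (x/2)^(2*k+nu) = (x/2)^nu * ((x/2)^2)^k"
      unfolding power_add power_mult by (rule mult.commute)
    show ?thesis unfolding besselI_def bc_def e by simp
  qed
  also have "\<dots> = (x/2)^nu * bF nu ((x/2)^2)"
    unfolding bF_def by (rule suminf_mult[OF bF_summable])
  finally show ?thesis .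
qed

lemma diffs_bc: "diffs (bc 0) = bc 1"
  by (auto simp: diffs_def bc_def fun_eq_iff field_simps simp del: fact_Suc)
    (simp add: fact_Suc algebra_simps)

lemma bF_deriv: "(bF nu has_field_derivative (\<Sum>n. diffs (bc nu) n * w^n)) (at w)"
  unfolding bF_def by (rule termdiffs_strong_converges_everywhere[OF bF_summable])

lemma bF0_deriv: "(bF 0 has_real_derivative bF 1 w) (at w)"
  using bF_deriv[of 0 w] by (simp add: diffs_bc bF_def)

lemma bF_cont: "isCont (bF nu) w"
  using bF_deriv DERIV_isCont by blast

lemma besselI0_deriv: "(besselI 0 has_real_derivative besselI 1 x) (at x)"
proof -
  have "((\<lambda>x. bF 0 ((x/2)^2)) has_real_derivative bF 1 ((x/2)^2) * (2 * (x/2) * (1/2))) (at x)"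
  proof (rule DERIV_chain2[OF bF0_deriv])
    have "((\<lambda>x::real. (x/2)^2) has_real_derivative (x/2)) (at x)"
      unfolding power2_eq_square
      by (rule derivative_eq_intros refl | simp)+
    thus "((\<lambda>x::real. (x/2)^2) has_real_derivative (2 * (x/2) * (1/2))) (at x)" by simp
  qed
  thus ?thesis by (simp add: besselI_bF[abs_def] besselI_bF[of 1] mult.commute)
qed

lemma besselI_cont: "isCont (besselI nu) x"
  unfolding besselI_bF[abs_def]
  by (intro continuous_intros isCont_o2[OF _ bF_cont]) simp_all

lemma besselI_measurable[measurable]: "besselI nu \<in> borel_measurable borel"
  by (intro borel_measurable_continuous_onI continuous_at_imp_continuous_on ballI besselI_cont)

lemma bF_ge1: "w \<ge> 0 \<Longrightarrow> bF 0 w \<ge> 1"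
proof -
  assume w: "w \<ge> 0"
  have "(\<Sum>k<1. bc 0 k * w ^ k) \<le> bF 0 w" unfolding bF_def
    by (rule sum_le_suminf[OF bF_summable]) (auto simp: bc_def w)
  thus ?thesis by (simp add: bc_def)
qed

lemma besselI0_ge1: "besselI 0 x \<ge> 1"
  by (simp add: besselI_bF bF_ge1)

lemma besselI0_pos: "besselI 0 x > 0"
  using besselI0_ge1[of x] by linarith

lemma bF_nonneg: "w \<ge> 0 \<Longrightarrow> bF nu w \<ge> 0"
  unfolding bF_def by (intro suminf_nonneg bF_summable) (auto simp: bc_def)

lemma besselI1_nonneg: "x \<ge> 0 \<Longrightarrow> besselI 1 x \<ge> 0"
  by (simp add: besselI_bF bF_nonneg)

lemma besselI1_le_I0:
  assumes x: "x \<ge> 0" shows "besselI 1 x \<le> besselI 0 x"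
proof -
  define y where "y = x/2"
  have y: "y \<ge> 0" using x by (simp add: y_def)
  define a where "a k = bc 0 k * (y^2)^k" for k
  define b where "b k = y * (bc 1 k * (y^2)^k)" for k
  have sa: "summable a" unfolding a_def by (rule bF_summable)
  have sb: "summable b" unfolding b_def by (intro summable_mult bF_summable)
  have sa1: "summable (\<lambda>k. a (Suc k))" using sa by (simp add: summable_Suc_iff)
  have ab: "2 * b k \<le> a k + a (Suc k)" for k
  proof -
    define A where "A = y^k / fact k"
    define B where "B = y^(Suc k) / fact (Suc k)"
    have "a k = A^2" unfolding a_def A_def bc_def by (simp add: power_mult[symmetric] power2_eq_square power_divide mult.commute power_mult_distrib)
    moreover have "a (Suc k) = B^2" unfolding a_def B_def bc_def
      by (simp add: power_mult[symmetric] power2_eq_square power_divide mult.commute power_mult_distrib del: fact_Suc power_Suc)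
    moreover have "b k = A * B" unfolding b_def A_def B_def bc_def
      by (simp add: power_mult[symmetric] field_simps mult_2_right power_add del: fact_Suc)
    moreover have "2 * (A*B) \<le> A^2 + B^2" using sum_squares_bound[of A B] by simp
    ultimately show ?thesis by simp
  qed
  have "2 * suminf b = (\<Sum>k. 2 * b k)" using suminf_mult[OF sb] by simp
  also have "\<dots> \<le> (\<Sum>k. a k + a (Suc k))"
    by (intro suminf_le ab summable_mult sb summable_add sa sa1)
  also have "\<dots> = suminf a + (suminf a - a 0)"
    using suminf_add[OF sa sa1] suminf_split_head[OF sa] by simp
  also have "\<dots> \<le> 2 * suminf a" using y by (simp add: a_def bc_def)
  finally have "suminf b \<le> suminf a" by simp
  moreover have "besselI 1 x = suminf b"
  proof -
    have "besselI 1 x = y * bF 1 (y^2)" unfolding besselI_bF y_def by simp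
    also have "\<dots> = suminf b" unfolding bF_def b_def by (rule suminf_mult[OF bF_summable, symmetric])
    finally show ?thesis .
  qed
  moreover have "besselI 0 x = suminf a"
    unfolding besselI_bF bF_def a_def y_def by simp
  ultimately show ?thesis by simp
qed

lemma gauss_moment_nn:
  assumes sg: "sg > 0"
  shows "(\<integral>\<^sup>+x. ennreal (indicator {0<..} x * (x^(2*m+1) * exp (-x\<^sup>2/(2* sg\<^sup>2)))) \<partial>lborel)
       = ennreal (2^m * fact m * sg^(2*m+2))"
proof -
  define c where "c = sqrt 2 * sg"
  have c: "c > 0" using sg by (simp add: c_def)
  have c2: "c^2 = 2 * sg^2" by (simp add: c_def power_mult_distrib)
  let ?f = "\<lambda>x::real. ennreal (indicator {0<..} x * (x^(2*m+1) * exp (-x\<^sup>2/(2* sg\<^sup>2))))"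
  have "(\<integral>\<^sup>+x. ?f x \<partial>lborel) = ennreal \<bar>c\<bar> * (\<integral>\<^sup>+x. ?f (0 + c * x) \<partial>lborel)"
    by (rule nn_integral_real_affine) (use c in auto)
  also have "(\<lambda>x. ?f (0 + c * x)) = (\<lambda>x. ennreal (c^(2*m+1)) * ennreal (indicator {0..} x *\<^sub>R (exp (-x\<^sup>2)*x^(2 * m + 1))))"
  proof
    fix x :: real
    have e: "(c*x)\<^sup>2/(2* sg\<^sup>2) = x\<^sup>2" using c2 sg by (simp add: power_mult_distrib)
    show "?f (0 + c * x) = ennreal (c^(2*m+1)) * ennreal (indicator {0..} x *\<^sub>R (exp (-x\<^sup>2)*x^(2 * m + 1)))"
      using c e
      by (cases "x > 0"; cases "x = 0")
         (auto simp: indicator_def ennreal_mult'[symmetric] power_mult_distrib zero_less_mult_iff mult_ac)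
  qed
  also have "(\<integral>\<^sup>+x. ennreal (c^(2*m+1)) * ennreal (indicator {0..} x *\<^sub>R (exp (-x\<^sup>2)*x^(2 * m + 1))) \<partial>lborel)
     = ennreal (c^(2*m+1)) * (\<integral>\<^sup>+x. ennreal (indicator {0..} x *\<^sub>R (exp (-x\<^sup>2)*x^(2 * m + 1))) \<partial>lborel)"
    by (rule nn_integral_cmult) measurable
  also have "(\<integral>\<^sup>+x. ennreal (indicator {0..} x *\<^sub>R (exp (-x\<^sup>2)*x^(2 * m + 1))) \<partial>lborel) = ennreal (fact m / 2)"
  proof -
    note g = gaussian_moment_odd_pos[of m]
    have "(\<integral>\<^sup>+x. ennreal (indicator {0..} x *\<^sub>R (exp (-x\<^sup>2)*x^(2 * m + 1))) \<partial>lborel) =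
        ennreal (integral\<^sup>L lborel (\<lambda>x. indicator {0..} x *\<^sub>R (exp (-x\<^sup>2)*x^(2 * m + 1))))"
      by (rule nn_integral_eq_integral[OF integrable.intros[OF g]])
        (auto simp: indicator_def)
    moreover have "integral\<^sup>L lborel (\<lambda>x. indicator {0..} x *\<^sub>R (exp (-x\<^sup>2)*x^(2 * m + 1))) = fact m / (2::real)"
      using has_bochner_integral_integral_eq[OF g] .
    ultimately show ?thesis by metis
  qed
  finally have "(\<integral>\<^sup>+x. ?f x \<partial>lborel) = ennreal (c * c^(2*m+1) * (fact m / 2))"
    using c by (simp add: ennreal_mult'[symmetric] mult.assoc)
  also have "c * c^(2*m+1) * (fact m / 2) = 2^m * fact m * sg^(2*m+2)"
  proof -
    have "c * c^(2*m+1) = (c^2)^(m+1)" by (simp add: power_mult[symmetric] algebra_simps mult_2_right power_add power2_eq_square)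
    also have "\<dots> = 2^(m+1) * (sg^2)^(m+1)" by (simp add: c2 power_mult_distrib)
    also have "(sg^2)^(m+1) = sg^(2*m+2)"
      by (metis power_mult add_mult_distrib2 mult_1_right)
    finally show ?thesis by simp
  qed
  finally show ?thesis .
qed

definition gmom :: "real \<Rightarrow> nat \<Rightarrow> real" where
  "gmom sg m = 2^m * fact m * sg^(2*m+2)"

lemma series_int:
  fixes a :: "nat \<Rightarrow> real" and g :: "real \<Rightarrow> real"
  assumes sg: "sg > 0" and a: "\<And>k. 0 \<le> a k" and gm[measurable]: "g \<in> borel_measurable borel"
    and gs: "\<And>x. x > 0 \<Longrightarrow> summable (\<lambda>k. a k * x^(2*(k+j)+1))"
    and gx: "\<And>x. x > 0 \<Longrightarrow> g x = (\<Sum>k. a k * x^(2*(k+j)+1))"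
    and sm: "summable (\<lambda>k. a k * gmom sg (k+j))"
  shows "has_bochner_integral lborel (\<lambda>x. indicator {0<..} x * (g x * exp (-x\<^sup>2/(2 * sg\<^sup>2))))
           (\<Sum>k. a k * gmom sg (k+j))"
proof (rule has_bochner_integral_nn_integral)
  show "(\<lambda>x. indicator {0<..} x * (g x * exp (-x\<^sup>2/(2 * sg\<^sup>2)))) \<in> borel_measurable lborel" by measurable
  show "AE x in lborel. 0 \<le> indicator {0<..} x * (g x * exp (-x\<^sup>2/(2 * sg\<^sup>2)))"
  proof (rule AE_I2)
    fix x :: real
    show "0 \<le> indicator {0<..} x * (g x * exp (-x\<^sup>2/(2 * sg\<^sup>2)))"
    proof (cases "x > 0")
      case True
      have "0 \<le> (\<Sum>k. a k * x^(2*(k+j)+1))"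
        by (rule suminf_nonneg[OF gs[OF True]]) (use True a in simp)
      hence "0 \<le> g x" using gx[OF True] by simp
      thus ?thesis using True by simp
    qed simp
  qed
  show "0 \<le> (\<Sum>k. a k * gmom sg (k+j))"
    by (intro suminf_nonneg sm mult_nonneg_nonneg a) (use sg in \<open>simp add: gmom_def\<close>)
  let ?t = "\<lambda>k x. ennreal (indicator {0<..} x * (a k * x^(2*(k+j)+1) * exp (-x\<^sup>2/(2 * sg\<^sup>2))))"
  have "(\<integral>\<^sup>+x. ennreal (indicator {0<..} x * (g x * exp (-x\<^sup>2/(2 * sg\<^sup>2)))) \<partial>lborel)
       = (\<integral>\<^sup>+x. (\<Sum>k. ?t k x) \<partial>lborel)"
  proof (rule nn_integral_cong)
    fix x :: real
    show "ennreal (indicator {0<..} x * (g x * exp (-x\<^sup>2/(2 * sg\<^sup>2)))) = (\<Sum>k. ?t k x)"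
    proof (cases "x > 0")
      case True
      have "g x * exp (-x\<^sup>2/(2 * sg\<^sup>2)) = (\<Sum>k. a k * x^(2*(k+j)+1) * exp (-x\<^sup>2/(2 * sg\<^sup>2)))"
        using gx[OF True] suminf_mult2[OF gs[OF True]] by simp
      moreover have "(\<Sum>k. ennreal (a k * x^(2*(k+j)+1) * exp (-x\<^sup>2/(2 * sg\<^sup>2)))) =
          ennreal (\<Sum>k. a k * x^(2*(k+j)+1) * exp (-x\<^sup>2/(2 * sg\<^sup>2)))"
        by (rule suminf_ennreal2) (use True a summable_mult2[OF gs[OF True]] in \<open>auto\<close>)
      ultimately show ?thesis using True by simp
    qed simp
  qed
  also have "\<dots> = (\<Sum>k. \<integral>\<^sup>+x. ?t k x \<partial>lborel)"
    by (rule nn_integral_suminf) measurable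
  also have "\<dots> = (\<Sum>k. ennreal (a k * gmom sg (k+j)))"
  proof (rule arg_cong[where f=suminf], rule ext)
    fix k
    have "(\<integral>\<^sup>+x. ?t k x \<partial>lborel) = (\<integral>\<^sup>+x. ennreal (a k) * ennreal (indicator {0<..} x * (x^(2*(k+j)+1) * exp (-x\<^sup>2/(2 * sg\<^sup>2)))) \<partial>lborel)"
      by (rule nn_integral_cong) (use a in \<open>auto simp: ennreal_mult'[symmetric] indicator_def mult_ac\<close>)
    also have "\<dots> = ennreal (a k) * (\<integral>\<^sup>+x. ennreal (indicator {0<..} x * (x^(2*(k+j)+1) * exp (-x\<^sup>2/(2 * sg\<^sup>2)))) \<partial>lborel)"
      by (rule nn_integral_cmult) measurable
    also have "\<dots> = ennreal (a k * gmom sg (k+j))"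
      using gauss_moment_nn[OF sg, of "k+j"] a by (simp add: gmom_def ennreal_mult'[symmetric])
    finally show "(\<integral>\<^sup>+x. ?t k x \<partial>lborel) = ennreal (a k * gmom sg (k+j))" .
  qed
  also have "\<dots> = ennreal (\<Sum>k. a k * gmom sg (k+j))"
    by (rule suminf_ennreal2[OF _ sm]) (use sg a in \<open>simp add: gmom_def\<close>)
  finally show "(\<integral>\<^sup>+x. ennreal (indicator {0<..} x * (g x * exp (-x\<^sup>2/(2 * sg\<^sup>2)))) \<partial>lborel) =
      ennreal (\<Sum>k. a k * gmom sg (k+j))" .
qed




lemma pow_split: "((x*q)^2)^k = (q^2)^k * (x^2)^k" for x q :: real
  unfolding power_mult_distrib by (rule mult.commute)

lemma exp_sums: "(\<lambda>k. w^k / fact k) sums exp (w::real)"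
  using exp_converges[of w] by (simp add: divide_inverse_commute)

lemma rice_A:
  assumes sg: "sg > 0" and z: "z \<ge> 0"
  shows "has_bochner_integral lborel (\<lambda>x. rice_pdf z sg x) 1"
proof -
  define q where "q = z / (2 * sg\<^sup>2)"
  define E where "E = exp (- z\<^sup>2 / (2 * sg\<^sup>2))"
  define a where "a k = E / sg\<^sup>2 * (bc 0 k * (q^2)^k)" for k
  define g where "g x = x / sg\<^sup>2 * E * besselI 0 (x * z / sg\<^sup>2)" for x
  have q: "q \<ge> 0" using z sg by (simp add: q_def)
  have hq: "(x * z / sg\<^sup>2) / 2 = x * q" for x using sg by (simp add: q_def field_simps)
  have terms: "a k * x^(2*(k+0)+1) = (x * E / sg\<^sup>2) * (bc 0 k * ((x*q)^2)^k)" for x k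
  proof -
    have "(x^k)^2 = (x^2)^k" by (metis power_mult mult.commute)
    thus ?thesis unfolding a_def pow_split by (simp add: power_mult field_simps)
  qed
  have gs: "summable (\<lambda>k. a k * x^(2*(k+0)+1))" for x
    unfolding terms by (intro summable_mult bF_summable)
  have gx: "g x = (\<Sum>k. a k * x^(2*(k+0)+1))" if "x > 0" for x
  proof -
    have "g x = (x * E / sg\<^sup>2) * bF 0 ((x*q)^2)"
      unfolding g_def besselI_bF[of 0] hq by simp
    also have "\<dots> = (\<Sum>k. a k * x^(2*(k+0)+1))"
      unfolding terms bF_def by (rule suminf_mult[OF bF_summable, symmetric])
    finally show ?thesis .
  qed
  have sm: "(\<lambda>k. a k * gmom sg (k+0)) sums (E * exp (2 * q^2 * sg^2))"
  proof -
    have "(\<lambda>k. a k * gmom sg (k+0)) = (\<lambda>k. E * ((2 * q^2 * sg^2)^k / fact k))"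
    proof
      fix k
      have "sg^(2*k+2) = (sg^2)^k * sg^2" by (simp add: power_add power_mult power2_eq_square)
      thus "a k * gmom sg (k+0) = E * ((2 * q^2 * sg^2)^k / fact k)"
        unfolding a_def gmom_def bc_def using sg
        by (simp add: power_mult_distrib field_simps)
    qed
    thus ?thesis using sums_mult[OF exp_sums, of E] by simp
  qed
  have val: "E * exp (2 * q^2 * sg^2) = 1"
  proof -
    have "2 * q^2 * sg^2 = z\<^sup>2 / (2 * sg\<^sup>2)" using sg by (simp add: q_def field_simps power2_eq_square)
    thus ?thesis by (simp add: E_def exp_minus[symmetric] exp_add[symmetric] field_simps)
  qed
  have "has_bochner_integral lborel (\<lambda>x. indicator {0<..} x * (g x * exp (-x\<^sup>2/(2 * sg\<^sup>2)))) (\<Sum>k. a k * gmom sg (k+0))"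
    by (rule series_int[OF sg _ _ gs gx sums_summable[OF sm]])
       (auto simp: a_def bc_def E_def g_def q intro!: mult_nonneg_nonneg)
  moreover have "(\<lambda>x. indicator {0<..} x * (g x * exp (-x\<^sup>2/(2 * sg\<^sup>2)))) = rice_pdf z sg"
  proof
    fix x
    show "indicator {0<..} x * (g x * exp (-x\<^sup>2/(2 * sg\<^sup>2))) = rice_pdf z sg x"
      unfolding rice_pdf_def g_def E_def
      by (simp add: indicator_def add_divide_distrib exp_add[symmetric] diff_divide_distrib)
  qed
  ultimately show ?thesis using sums_unique[OF sm] val by simp
qed

lemma rice_pdf_measurable[measurable]: "rice_pdf z sg \<in> borel_measurable borel"
  unfolding rice_pdf_def[abs_def] by measurable

lemma rice_B:
  assumes sg: "sg > 0" and z: "z \<ge> 0"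
  shows "has_bochner_integral lborel
     (\<lambda>x. x * (besselI 1 (x * z / sg\<^sup>2) / besselI 0 (x * z / sg\<^sup>2)) * rice_pdf z sg x) z"
proof -
  define q where "q = z / (2 * sg\<^sup>2)"
  define E where "E = exp (- z\<^sup>2 / (2 * sg\<^sup>2))"
  define a where "a k = E / sg\<^sup>2 * (bc 1 k * q^(2*k+1))" for k
  define g where "g x = x^2 / sg\<^sup>2 * E * besselI 1 (x * z / sg\<^sup>2)" for x
  have q: "q \<ge> 0" using z sg by (simp add: q_def)
  have hq: "(x * z / sg\<^sup>2) / 2 = x * q" for x using sg by (simp add: q_def field_simps)
  have terms: "a k * x^(2*(k+1)+1) = (x^2 * E / sg\<^sup>2 * (x*q)) * (bc 1 k * ((x*q)^2)^k)" for x k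
  proof -
    have "(x^k)^2 = (x^2)^k" by (metis power_mult mult.commute)
    have B: "q^(2*k+1) = q * (q^2)^k" by (simp add: power_mult)
    have C: "x^(2*(k+1)+1) = x^2 * x * (x^2)^k" by (simp add: power_mult power_add power3_eq_cube power2_eq_square)
    show ?thesis unfolding a_def pow_split B C by (simp add: mult_ac divide_inverse)
  qed
  have gs: "summable (\<lambda>k. a k * x^(2*(k+1)+1))" for x
    unfolding terms by (intro summable_mult bF_summable)
  have gx: "g x = (\<Sum>k. a k * x^(2*(k+1)+1))" if "x > 0" for x
  proof -
    have "g x = (x^2 * E / sg\<^sup>2 * (x*q)) * bF 1 ((x*q)^2)"
      unfolding g_def besselI_bF[of 1] hq by simp
    also have "\<dots> = (\<Sum>k. a k * x^(2*(k+1)+1))"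
      unfolding terms bF_def by (rule suminf_mult[OF bF_summable, symmetric])
    finally show ?thesis .
  qed
  have sm: "(\<lambda>k. a k * gmom sg (k+1)) sums ((E * (2 * q * sg^2)) * exp (2 * q^2 * sg^2))"
  proof -
    have "(\<lambda>k. a k * gmom sg (k+1)) = (\<lambda>k. (E * (2 * q * sg^2)) * ((2 * q^2 * sg^2)^k / fact k))"
    proof
      fix k
      have e1: "sg^(2*(k+1)+2) = (sg^2)^k * sg^2 * sg^2" by (simp add: power_add power_mult power2_eq_square)
      have e2: "q^(2*k+1) = q * (q^2)^k" by (simp add: power_mult)
      have e3: "fact (k+1) = (real k + 1) * fact k" by simp
      have e4: "(2 * q^2 * sg^2)^k = 2^k * (q^2)^k * (sg^2)^k" by (simp add: power_mult_distrib)
      have e5: "(2::real)^(k+1) = 2 * 2^k" by simp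
      have alg: "r \<noteq> 0 \<Longrightarrow> F \<noteq> 0 \<Longrightarrow> F1 \<noteq> 0 \<Longrightarrow>
          E / r * (1/(F*F1) * (q*Q)) * (2*T*F1*(S*r*r)) = E*(2*q*r)*(T*Q*S/F)" for r F F1 Q T S :: real
        by (simp add: field_simps)
      show "a k * gmom sg (k+1) = (E * (2 * q * sg^2)) * ((2 * q^2 * sg^2)^k / fact k)"
        unfolding a_def gmom_def bc_def e1 e2 e4 e5 by (rule alg) (use sg in auto)
    qed
    thus ?thesis using sums_mult[OF exp_sums, of "E * (2 * q * sg^2)"] by simp
  qed
  have val: "(E * (2 * q * sg^2)) * exp (2 * q^2 * sg^2) = z"
  proof -
    have "2 * q^2 * sg^2 = z\<^sup>2 / (2 * sg\<^sup>2)" using sg by (simp add: q_def field_simps power2_eq_square)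
    moreover have "2 * q * sg^2 = z" using sg by (simp add: q_def)
    moreover have "E * exp (z\<^sup>2 / (2 * sg\<^sup>2)) = 1" unfolding E_def
      by (simp add: exp_add[symmetric])
    ultimately show ?thesis by (simp add: mult_ac)
  qed
  have a0: "0 \<le> a k" for k unfolding a_def bc_def E_def using q by simp
  have gm: "g \<in> borel_measurable borel" unfolding g_def by measurable
  have "has_bochner_integral lborel (\<lambda>x. indicator {0<..} x * (g x * exp (-x\<^sup>2/(2 * sg\<^sup>2)))) (\<Sum>k. a k * gmom sg (k+1))"
    by (rule series_int[OF sg a0 gm gs gx sums_summable[OF sm]])
  moreover have "(\<lambda>x. indicator {0<..} x * (g x * exp (-x\<^sup>2/(2 * sg\<^sup>2)))) =
      (\<lambda>x. x * (besselI 1 (x * z / sg\<^sup>2) / besselI 0 (x * z / sg\<^sup>2)) * rice_pdf z sg x)"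
  proof
    fix x
    have I0: "besselI 0 (x * z / sg\<^sup>2) \<noteq> 0" using besselI0_pos by (metis less_irrefl)
    show "indicator {0<..} x * (g x * exp (-x\<^sup>2/(2 * sg\<^sup>2))) =
        x * (besselI 1 (x * z / sg\<^sup>2) / besselI 0 (x * z / sg\<^sup>2)) * rice_pdf z sg x"
      unfolding rice_pdf_def g_def E_def using I0
      by (simp add: indicator_def add_divide_distrib exp_add[symmetric] diff_divide_distrib power2_eq_square)
  qed
  ultimately show ?thesis using sums_unique[OF sm] val by simp
qed

lemma rice_C:
  assumes sg: "sg > 0" and z: "z \<ge> 0"
  shows "integrable lborel
     (\<lambda>x. (x * (besselI 1 (x * z / sg\<^sup>2) / besselI 0 (x * z / sg\<^sup>2)))\<^sup>2 * rice_pdf z sg x)"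
proof -
  define q where "q = z / (2 * sg\<^sup>2)"
  define E where "E = exp (- z\<^sup>2 / (2 * sg\<^sup>2))"
  define a where "a k = E / sg\<^sup>2 * (bc 0 k * q^(2*k))" for k
  define g where "g x = x^3 / sg\<^sup>2 * E * besselI 0 (x * z / sg\<^sup>2)" for x
  have q: "q \<ge> 0" using z sg by (simp add: q_def)
  have hq: "(x * z / sg\<^sup>2) / 2 = x * q" for x using sg by (simp add: q_def field_simps)
  have terms: "a k * x^(2*(k+1)+1) = (x^3 * E / sg\<^sup>2) * (bc 0 k * ((x*q)^2)^k)" for x k
  proof -
    have "(x^k)^2 = (x^2)^k" by (metis power_mult mult.commute)
    have B: "q^(2*k) = (q^2)^k" by (simp add: power_mult)
    have C: "x^(2*(k+1)+1) = x^3 * (x^2)^k" by (simp add: power_mult power_add power3_eq_cube power2_eq_square)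
    show ?thesis unfolding a_def pow_split B C by (simp add: mult_ac divide_inverse)
  qed
  have gs: "summable (\<lambda>k. a k * x^(2*(k+1)+1))" for x
    unfolding terms by (intro summable_mult bF_summable)
  have gx: "g x = (\<Sum>k. a k * x^(2*(k+1)+1))" if "x > 0" for x
  proof -
    have "g x = (x^3 * E / sg\<^sup>2) * bF 0 ((x*q)^2)"
      unfolding g_def besselI_bF[of 0] hq by simp
    also have "\<dots> = (\<Sum>k. a k * x^(2*(k+1)+1))"
      unfolding terms bF_def by (rule suminf_mult[OF bF_summable, symmetric])
    finally show ?thesis .
  qed
  have sm: "summable (\<lambda>k. a k * gmom sg (k+1))"
  proof (rule summable_comparison_test[OF _ summable_mult[OF sums_summable[OF exp_sums[of "2 * (2 * q^2 * sg^2)"]], of "2 * E * sg^2"]])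
    show "\<exists>N. \<forall>n\<ge>N. norm (a n * gmom sg (n + 1)) \<le> 2 * E * sg^2 * ((2 * (2 * q^2 * sg^2))^n / fact n)"
    proof (intro exI allI impI)
      fix k :: nat
      have e1: "sg^(2*(k+1)+2) = (sg^2)^k * sg^2 * sg^2" by (simp add: power_add power_mult power2_eq_square)
      have e2: "q^(2*k) = (q^2)^k" by (simp add: power_mult)
      have e3: "fact (k+1) = (real k + 1) * fact k" by simp
      have e4: "(2 * q^2 * sg^2)^k = 2^k * (q^2)^k * (sg^2)^k" by (simp add: power_mult_distrib)
      have e5: "(2::real)^(k+1) = 2 * 2^k" by simp
      have alg: "r \<noteq> 0 \<Longrightarrow> F \<noteq> 0 \<Longrightarrow>
          E/r*(1/(F*F)*Q) * (2*T*((real k+1)*F)*(S*r*r)) = 2*E*r*((real k+1)*(T*Q*S)/F)" for r F Q T S :: real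
        by (simp add: field_simps)
      have eq: "a k * gmom sg (k+1) = 2 * E * sg^2 * ((real k + 1) * (2 * q^2 * sg^2)^k / fact k)"
        unfolding a_def gmom_def bc_def e1 e2 e3 e4 e5 by (simp only: add_0_right) (rule alg, use sg in auto)
      have kk: "real k + 1 \<le> 2^k"
      proof -
        have "k < 2^k" by (rule less_exp)
        hence "real k + 1 \<le> real (2^k)" by linarith
        thus ?thesis by simp
      qed
      have nn: "0 \<le> (2 * q^2 * sg^2)^k / fact k" using sg by simp
      have "(real k + 1) * (2 * q^2 * sg^2)^k / fact k \<le> 2^k * (2 * q^2 * sg^2)^k / fact k"
        using mult_right_mono[OF kk nn] by simp
      also have "\<dots> = (2 * (2 * q^2 * sg^2))^k / fact k" by (simp only: power_mult_distrib mult.assoc)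
      finally have le: "(real k + 1) * (2 * q^2 * sg^2)^k / fact k \<le> (2 * (2 * q^2 * sg^2))^k / fact k" .
      have E0: "0 \<le> 2 * E * sg^2" unfolding E_def by simp
      have "0 \<le> a k * gmom sg (k+1)" unfolding eq using E0 sg by simp
      thus "norm (a k * gmom sg (k + 1)) \<le> 2 * E * sg^2 * ((2 * (2 * q^2 * sg^2))^k / fact k)"
        unfolding eq using mult_left_mono[OF le E0] by simp
    qed
  qed
  have a0: "0 \<le> a k" for k unfolding a_def bc_def E_def using q by simp
  have gm: "g \<in> borel_measurable borel" unfolding g_def by measurable
  have hint: "integrable lborel (\<lambda>x. indicator {0<..} x * (g x * exp (-x\<^sup>2/(2 * sg\<^sup>2))))"
    using series_int[OF sg a0 gm gs gx sm] by (rule integrable.intros)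
  show ?thesis
  proof (rule Bochner_Integration.integrable_bound[OF hint])
    show "(\<lambda>x. (x * (besselI 1 (x * z / sg\<^sup>2) / besselI 0 (x * z / sg\<^sup>2)))\<^sup>2 * rice_pdf z sg x) \<in> borel_measurable lborel"
      by measurable
    show "AE x in lborel. norm ((x * (besselI 1 (x * z / sg\<^sup>2) / besselI 0 (x * z / sg\<^sup>2)))\<^sup>2 * rice_pdf z sg x)
        \<le> norm (indicator {0<..} x * (g x * exp (-x\<^sup>2/(2 * sg\<^sup>2))))"
    proof (rule AE_I2)
      fix x :: real
      show "norm ((x * (besselI 1 (x * z / sg\<^sup>2) / besselI 0 (x * z / sg\<^sup>2)))\<^sup>2 * rice_pdf z sg x)
        \<le> norm (indicator {0<..} x * (g x * exp (-x\<^sup>2/(2 * sg\<^sup>2))))"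
      proof (cases "x > 0")
        case False thus ?thesis by (simp add: rice_pdf_def)
      next
        case True
        define y where "y = x * z / sg\<^sup>2"
        have y: "y \<ge> 0" using True z sg by (simp add: y_def)
        define I0 where "I0 = besselI 0 y"
        define I1 where "I1 = besselI 1 y"
        have I0: "I0 > 0" unfolding I0_def by (rule besselI0_pos)
        have I1: "0 \<le> I1" "I1 \<le> I0" unfolding I0_def I1_def using besselI1_nonneg[OF y] besselI1_le_I0[OF y] by auto
        define K where "K = x^3 / sg\<^sup>2 * E * exp (-x\<^sup>2/(2 * sg\<^sup>2))"
        have K: "K \<ge> 0" unfolding K_def E_def using True sg by simp
        have ex: "exp (- (x\<^sup>2 + z\<^sup>2) / (2 * sg\<^sup>2)) = E * exp (-x\<^sup>2/(2 * sg\<^sup>2))"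
          unfolding E_def by (simp add: exp_add[symmetric] add_divide_distrib diff_divide_distrib)
        have rp: "rice_pdf z sg x = x / sg\<^sup>2 * (E * exp (-x\<^sup>2/(2 * sg\<^sup>2))) * I0"
          unfolding rice_pdf_def I0_def y_def using True ex by simp
        have lhs: "(x * (I1 / I0))\<^sup>2 * rice_pdf z sg x = K * (I1^2 / I0)"
          unfolding rp K_def using True I0
          by (simp add: field_simps power2_eq_square power3_eq_cube)
        have rhs: "indicator {0<..} x * (g x * exp (-x\<^sup>2/(2 * sg\<^sup>2))) = K * I0"
          unfolding g_def K_def using True by (simp add: y_def[symmetric] I0_def[symmetric])
        have "I1^2 / I0 \<le> I0"
        proof -
          have "I1^2 \<le> I0^2" using I1 by (simp add: power_mono)
          thus ?thesis using I0 by (simp add: divide_simps power2_eq_square)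
        qed
        hence "K * (I1^2 / I0) \<le> K * I0" using K by (rule mult_left_mono)
        moreover have "0 \<le> K * (I1^2 / I0)" using K I0 by simp
        ultimately show ?thesis using lhs rhs unfolding y_def[symmetric] I0_def[symmetric] I1_def[symmetric]
          by simp
      qed
    qed
  qed
qed




definition gsc :: "real \<Rightarrow> real \<Rightarrow> real \<Rightarrow> real" where
  "gsc sg z x = x / sg\<^sup>2 * (besselI 1 (x * z / sg\<^sup>2) / besselI 0 (x * z / sg\<^sup>2)) - z / sg\<^sup>2"

lemma rice_pdf_pos: "sg > 0 \<Longrightarrow> x > 0 \<Longrightarrow> rice_pdf z sg x > 0"
  unfolding rice_pdf_def using besselI0_pos by simp

lemma rice_pdf_nonneg: "sg > 0 \<Longrightarrow> rice_pdf z sg x \<ge> 0"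
  using rice_pdf_pos[of sg x z] by (cases "x > 0") (auto simp: rice_pdf_def)

lemma lnpdf_deriv:
  assumes sg: "sg > 0" and x: "x > 0"
  shows "((\<lambda>w. ln (rice_pdf w sg x)) has_real_derivative gsc sg z x) (at z)"
proof -
  define f where "f w = x / sg\<^sup>2 * exp (- (x\<^sup>2 + w\<^sup>2) / (2 * sg\<^sup>2)) * besselI 0 (x * w / sg\<^sup>2)" for w
  have fe: "(\<lambda>w. rice_pdf w sg x) = f" unfolding f_def[abs_def] rice_pdf_def using x by simp
  have d0: "((\<lambda>w. besselI 0 (x * w / sg\<^sup>2)) has_real_derivative besselI 1 (x * z / sg\<^sup>2) * (x / sg\<^sup>2)) (at z)"
  proof (rule DERIV_chain2[OF besselI0_deriv])
    have "((\<lambda>w. (x / sg\<^sup>2) * w) has_real_derivative x / sg\<^sup>2 * 1) (at z)"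
      by (rule DERIV_cmult[OF DERIV_ident])
    thus "((\<lambda>w. x * w / sg\<^sup>2) has_real_derivative x / sg\<^sup>2) (at z)" by simp
  qed
  have de: "((\<lambda>w. exp (- (x\<^sup>2 + w\<^sup>2) / (2 * sg\<^sup>2))) has_real_derivative
       exp (- (x\<^sup>2 + z\<^sup>2) / (2 * sg\<^sup>2)) * (- z / sg\<^sup>2)) (at z)"
    using sg by (auto intro!: derivative_eq_intros simp: field_simps power2_eq_square)
  have df: "(f has_real_derivative
      x / sg\<^sup>2 * (exp (- (x\<^sup>2 + z\<^sup>2) / (2 * sg\<^sup>2)) * (- z / sg\<^sup>2)) * besselI 0 (x * z / sg\<^sup>2)
      + besselI 1 (x * z / sg\<^sup>2) * (x / sg\<^sup>2) * (x / sg\<^sup>2 * exp (- (x\<^sup>2 + z\<^sup>2) / (2 * sg\<^sup>2)))) (at z)"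
    unfolding f_def[abs_def] by (rule DERIV_mult[OF DERIV_cmult[OF de] d0])
  have fpos: "f z > 0" using rice_pdf_pos[OF sg x, of z] fe by metis
  have "((\<lambda>w. ln (f w)) has_real_derivative (1 / f z) * (x / sg\<^sup>2 * (exp (- (x\<^sup>2 + z\<^sup>2) / (2 * sg\<^sup>2)) * (- z / sg\<^sup>2)) * besselI 0 (x * z / sg\<^sup>2)
      + besselI 1 (x * z / sg\<^sup>2) * (x / sg\<^sup>2) * (x / sg\<^sup>2 * exp (- (x\<^sup>2 + z\<^sup>2) / (2 * sg\<^sup>2))))) (at z)"
    by (rule DERIV_chain2[OF DERIV_ln_divide[OF fpos] df])
  moreover have "(1 / f z) * (x / sg\<^sup>2 * (exp (- (x\<^sup>2 + z\<^sup>2) / (2 * sg\<^sup>2)) * (- z / sg\<^sup>2)) * besselI 0 (x * z / sg\<^sup>2)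
      + besselI 1 (x * z / sg\<^sup>2) * (x / sg\<^sup>2) * (x / sg\<^sup>2 * exp (- (x\<^sup>2 + z\<^sup>2) / (2 * sg\<^sup>2))))
      = gsc sg z x"
  proof -
    have I0: "besselI 0 (x * z / sg\<^sup>2) > 0" by (rule besselI0_pos)
    show ?thesis unfolding f_def gsc_def using I0 sg x by (simp add: field_simps)
  qed
  ultimately have "((\<lambda>w. ln (f w)) has_real_derivative gsc sg z x) (at z)" by simp
  moreover have "(\<lambda>w. ln (rice_pdf w sg x)) = (\<lambda>w. ln (f w))" using fe by (metis)
  ultimately show ?thesis by simp
qed

lemma deriv_lnpdf:
  assumes sg: "sg > 0"
  shows "deriv (\<lambda>w. ln (rice_pdf w sg x)) z * rice_pdf z sg x = gsc sg z x * rice_pdf z sg x"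
proof (cases "x > 0")
  case True thus ?thesis using DERIV_imp_deriv[OF lnpdf_deriv[OF sg True]] by simp
next
  case False thus ?thesis by (simp add: rice_pdf_def)
qed

lemma rice_fisher_gsc:
  assumes sg: "sg > 0"
  shows "rice_fisher z sg = (\<integral>x. (gsc sg z x)\<^sup>2 * rice_pdf z sg x \<partial>lborel)"
  unfolding rice_fisher_def
proof (rule Bochner_Integration.integral_cong[OF refl])
  fix x
  have "deriv (\<lambda>w. ln (rice_pdf w sg x)) z * rice_pdf z sg x = gsc sg z x * rice_pdf z sg x"
    by (rule deriv_lnpdf[OF sg])
  thus "(deriv (\<lambda>z. ln (rice_pdf z sg x)) z)\<^sup>2 * rice_pdf z sg x = (gsc sg z x)\<^sup>2 * rice_pdf z sg x"
    by (cases "rice_pdf z sg x = 0") (auto simp: power2_eq_square)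
qed

lemma J_formula:
  assumes sg: "sg > 0"
  shows "(\<integral>x. (x * (besselI 1 (x * z / sg\<^sup>2) / besselI 0 (x * z / sg\<^sup>2)))\<^sup>2 * rice_pdf z sg x \<partial>lborel)
     = sg\<^sup>2 * exp (- z\<^sup>2 / (2 * sg\<^sup>2)) * Vfun (z / sg)"
proof -
  define E where "E = exp (- z\<^sup>2 / (2 * sg\<^sup>2))"
  define w where "w = z / sg"
  let ?f = "\<lambda>x. (x * (besselI 1 (x * z / sg\<^sup>2) / besselI 0 (x * z / sg\<^sup>2)))\<^sup>2 * rice_pdf z sg x"
  let ?h = "\<lambda>u. indicator {0<..} u *\<^sub>R (u ^ 3 * (besselI 1 (u * w))\<^sup>2 / besselI 0 (u * w) * exp (- u\<^sup>2 / 2))"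
  have "integral\<^sup>L lborel ?f = \<bar>sg\<bar> *\<^sub>R (\<integral>u. ?f (0 + sg * u) \<partial>lborel)"
    by (rule lborel_integral_real_affine) (use sg in simp)
  also have "(\<lambda>u. ?f (0 + sg * u)) = (\<lambda>u. (sg * E) * ?h u)"
  proof
    fix u :: real
    show "?f (0 + sg * u) = (sg * E) * ?h u"
    proof (cases "u > 0")
      case False
      hence "\<not> sg * u > 0" using sg by (simp add: zero_less_mult_iff)
      thus ?thesis using False by (simp add: rice_pdf_def)
    next
      case True
      have a1: "sg * u * z / sg\<^sup>2 = u * w" using sg by (simp add: w_def power2_eq_square field_simps)
      have a2: "exp (- ((sg * u)\<^sup>2 + z\<^sup>2) / (2 * sg\<^sup>2)) = E * exp (- u\<^sup>2 / 2)"
      proof -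
        have "- ((sg * u)\<^sup>2 + z\<^sup>2) / (2 * sg\<^sup>2) = - z\<^sup>2 / (2 * sg\<^sup>2) + - u\<^sup>2 / 2"
          using sg by (simp add: field_simps power2_eq_square)
        thus ?thesis unfolding E_def exp_add[symmetric] by (rule arg_cong)
      qed
      have I0: "besselI 0 (u * w) > 0" by (rule besselI0_pos)
      have alg: "sg \<noteq> 0 \<Longrightarrow> b \<noteq> 0 \<Longrightarrow> (sg*u*(a/b))\<^sup>2 * (sg*u/sg\<^sup>2 * (E*e) * b) = (sg*E) * (u^3*a\<^sup>2/b*e)"
        for a b e :: real by (simp add: field_simps power2_eq_square power3_eq_cube)
      have "?f (0 + sg * u) = (sg * u * (besselI 1 (u * w) / besselI 0 (u * w)))\<^sup>2 *
          (sg * u / sg\<^sup>2 * (E * exp (- u\<^sup>2 / 2)) * besselI 0 (u * w))"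
        unfolding rice_pdf_def using True sg a1 a2 by simp
      also have "\<dots> = (sg * E) * (u ^ 3 * (besselI 1 (u * w))\<^sup>2 / besselI 0 (u * w) * exp (- u\<^sup>2 / 2))"
        by (rule alg) (use sg I0 in auto)
      also have "\<dots> = (sg * E) * ?h u" using True by simp
      finally show ?thesis .
    qed
  qed
  also have "(\<integral>u. (sg * E) * ?h u \<partial>lborel) = (sg * E) * Vfun w"
    unfolding Vfun_def set_lebesgue_integral_def by (rule integral_mult_right_zero)
  finally show ?thesis using sg by (simp add: E_def w_def power2_eq_square)
qed

lemma fisher_formula:
  assumes sg: "sg > 0" and z: "z \<ge> 0"
  shows "rice_fisher z sg = 1 / sg\<^sup>2 * (exp (- z\<^sup>2 / (2 * sg\<^sup>2)) * Vfun (z / sg) - z\<^sup>2 / sg\<^sup>2)"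
proof -
  let ?R = "\<lambda>x. x * (besselI 1 (x * z / sg\<^sup>2) / besselI 0 (x * z / sg\<^sup>2))"
  let ?p = "rice_pdf z sg"
  define J where "J = (\<integral>x. (?R x)\<^sup>2 * ?p x \<partial>lborel)"
  have hA: "has_bochner_integral lborel ?p 1" by (rule rice_A[OF sg z])
  have hB: "has_bochner_integral lborel (\<lambda>x. ?R x * ?p x) z" by (rule rice_B[OF sg z])
  have hC: "has_bochner_integral lborel (\<lambda>x. (?R x)\<^sup>2 * ?p x) J"
    unfolding J_def by (rule has_bochner_integral_integrable[OF rice_C[OF sg z]])
  have h: "has_bochner_integral lborel
      (\<lambda>x. (1 / (sg\<^sup>2)\<^sup>2) * ((?R x)\<^sup>2 * ?p x) - (2 * z / (sg\<^sup>2)\<^sup>2) * (?R x * ?p x) + (z\<^sup>2 / (sg\<^sup>2)\<^sup>2) * ?p x)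
      ((1 / (sg\<^sup>2)\<^sup>2) * J - (2 * z / (sg\<^sup>2)\<^sup>2) * z + (z\<^sup>2 / (sg\<^sup>2)\<^sup>2) * 1)"
    by (intro has_bochner_integral_add has_bochner_integral_diff has_bochner_integral_mult_right hA hB hC)
  have alg: "s \<noteq> 0 \<Longrightarrow> (x/s*r - z/s)\<^sup>2 * p = 1/s\<^sup>2 * ((x*r)\<^sup>2*p) - 2*z/s\<^sup>2*(x*r*p) + z\<^sup>2/s\<^sup>2*p"
    for s x r p :: real by (simp add: field_simps power2_eq_square)
  have eq: "(gsc sg z x)\<^sup>2 * ?p x =
      (1 / (sg\<^sup>2)\<^sup>2) * ((?R x)\<^sup>2 * ?p x) - (2 * z / (sg\<^sup>2)\<^sup>2) * (?R x * ?p x) + (z\<^sup>2 / (sg\<^sup>2)\<^sup>2) * ?p x" for x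
    unfolding gsc_def by (rule alg) (use sg in simp)
  have "rice_fisher z sg = (1 / (sg\<^sup>2)\<^sup>2) * J - (2 * z / (sg\<^sup>2)\<^sup>2) * z + (z\<^sup>2 / (sg\<^sup>2)\<^sup>2) * 1"
    unfolding rice_fisher_gsc[OF sg] eq by (rule has_bochner_integral_integral_eq[OF h])
  also have "J = sg\<^sup>2 * exp (- z\<^sup>2 / (2 * sg\<^sup>2)) * Vfun (z / sg)"
    unfolding J_def by (rule J_formula[OF sg])
  finally show ?thesis using sg by (simp add: field_simps power2_eq_square power4_eq_xxxx)
qed

lemma Vfun_subst:
  assumes w: "w > 0"
  shows "Vfun w = 1 / w ^ 4 *
           (LBINT v:{0<..}. v ^ 3 * (besselI 1 v)\<^sup>2 / besselI 0 v * exp (- v\<^sup>2 / (2 * w\<^sup>2)))"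
proof -
  let ?g = "\<lambda>v. indicator {0<..} v *\<^sub>R (v ^ 3 * (besselI 1 v)\<^sup>2 / besselI 0 v * exp (- v\<^sup>2 / (2 * w\<^sup>2)))"
  let ?h = "\<lambda>u. indicator {0<..} u *\<^sub>R (u ^ 3 * (besselI 1 (u * w))\<^sup>2 / besselI 0 (u * w) * exp (- u\<^sup>2 / 2))"
  have "integral\<^sup>L lborel ?g = \<bar>w\<bar> *\<^sub>R (\<integral>u. ?g (0 + w * u) \<partial>lborel)"
    by (rule lborel_integral_real_affine) (use w in simp)
  also have "(\<lambda>u. ?g (0 + w * u)) = (\<lambda>u. w^3 * ?h u)"
  proof
    fix u :: real
    have pos: "w * u > 0 \<longleftrightarrow> u > 0" using w by (simp add: zero_less_mult_iff)
    have e: "(w * u)\<^sup>2 / (2 * w\<^sup>2) = u\<^sup>2 / 2" using w by (simp add: power2_eq_square field_simps)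
    show "?g (0 + w * u) = w^3 * ?h u"
    proof (cases "u > 0")
      case True
      have wu: "w * u = u * w" by (rule mult.commute)
      show ?thesis using True pos unfolding e wu by (simp add: power_mult_distrib mult_ac)
    qed (use pos in simp)
  qed
  also have "(\<integral>u. w^3 * ?h u \<partial>lborel) = w^3 * Vfun w"
    unfolding Vfun_def set_lebesgue_integral_def by (rule integral_mult_right_zero)
  finally have "integral\<^sup>L lborel ?g = w^4 * Vfun w" using w by (simp add: power_Suc[symmetric] del: power_Suc)
  thus ?thesis unfolding set_lebesgue_integral_def using w by simp
qed




lemma gp_int:
  assumes sg: "sg > 0" and z: "z \<ge> 0"
  shows "has_bochner_integral lborel (\<lambda>x. rice_pdf z sg x * gsc sg z x) 0"
proof -
  let ?R = "\<lambda>x. x * (besselI 1 (x * z / sg\<^sup>2) / besselI 0 (x * z / sg\<^sup>2))"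
  let ?p = "rice_pdf z sg"
  have h: "has_bochner_integral lborel (\<lambda>x. (1 / sg\<^sup>2) * (?R x * ?p x) - (z / sg\<^sup>2) * ?p x)
      ((1 / sg\<^sup>2) * z - (z / sg\<^sup>2) * 1)"
    by (intro has_bochner_integral_diff has_bochner_integral_mult_right rice_A[OF sg z] rice_B[OF sg z])
  have alg: "s \<noteq> 0 \<Longrightarrow> p * (x/s*r - z/s) = 1/s * (x*r*p) - z/s*p" for s x r p :: real
    by (simp add: field_simps)
  have eq: "?p x * gsc sg z x = (1 / sg\<^sup>2) * (?R x * ?p x) - (z / sg\<^sup>2) * ?p x" for x
    unfolding gsc_def by (rule alg) (use sg in simp)
  show ?thesis using h unfolding eq by simp
qed

lemma ggp_int:
  assumes sg: "sg > 0" and z: "z \<ge> 0"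
  shows "has_bochner_integral lborel (\<lambda>x. rice_pdf z sg x * gsc sg z x * gsc sg z x) (rice_fisher z sg)"
proof -
  let ?R = "\<lambda>x. x * (besselI 1 (x * z / sg\<^sup>2) / besselI 0 (x * z / sg\<^sup>2))"
  let ?p = "rice_pdf z sg"
  define J where "J = (\<integral>x. (?R x)\<^sup>2 * ?p x \<partial>lborel)"
  have hA: "has_bochner_integral lborel ?p 1" by (rule rice_A[OF sg z])
  have hB: "has_bochner_integral lborel (\<lambda>x. ?R x * ?p x) z" by (rule rice_B[OF sg z])
  have hC: "has_bochner_integral lborel (\<lambda>x. (?R x)\<^sup>2 * ?p x) J"
    unfolding J_def by (rule has_bochner_integral_integrable[OF rice_C[OF sg z]])
  have h: "has_bochner_integral lborel
      (\<lambda>x. (1 / (sg\<^sup>2)\<^sup>2) * ((?R x)\<^sup>2 * ?p x) - (2 * z / (sg\<^sup>2)\<^sup>2) * (?R x * ?p x) + (z\<^sup>2 / (sg\<^sup>2)\<^sup>2) * ?p x)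
      ((1 / (sg\<^sup>2)\<^sup>2) * J - (2 * z / (sg\<^sup>2)\<^sup>2) * z + (z\<^sup>2 / (sg\<^sup>2)\<^sup>2) * 1)"
    by (intro has_bochner_integral_add has_bochner_integral_diff has_bochner_integral_mult_right hA hB hC)
  have alg: "s \<noteq> 0 \<Longrightarrow> p * (x/s*r - z/s) * (x/s*r - z/s) = 1/s\<^sup>2 * ((x*r)\<^sup>2*p) - 2*z/s\<^sup>2*(x*r*p) + z\<^sup>2/s\<^sup>2*p"
    for s x r p :: real by (simp add: field_simps power2_eq_square)
  have eq: "?p x * gsc sg z x * gsc sg z x =
      (1 / (sg\<^sup>2)\<^sup>2) * ((?R x)\<^sup>2 * ?p x) - (2 * z / (sg\<^sup>2)\<^sup>2) * (?R x * ?p x) + (z\<^sup>2 / (sg\<^sup>2)\<^sup>2) * ?p x" for x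
    unfolding gsc_def by (rule alg) (use sg in simp)
  have int: "integrable lborel (\<lambda>x. rice_pdf z sg x * gsc sg z x * gsc sg z x)"
    using h unfolding eq[symmetric] by (rule integrable.intros)
  moreover have "integral\<^sup>L lborel (\<lambda>x. rice_pdf z sg x * gsc sg z x * gsc sg z x) = rice_fisher z sg"
    unfolding rice_fisher_gsc[OF sg] by (rule Bochner_Integration.integral_cong) (simp_all add: power2_eq_square mult_ac)
  ultimately show ?thesis using has_bochner_integral_integrable by metis
qed

lemma zeta_shift: "zeta S0 (D + t *\<^sub>R axis i 1) b = S0 * exp (- (xvec b \<bullet> D + t * xvec b $ i))"
  unfolding zeta_def by (simp add: inner_add_right inner_axis)

lemma zeta_pos: "S0 > 0 \<Longrightarrow> zeta S0 D b > 0"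
  unfolding zeta_def by simp

lemma score_formula:
  assumes S0: "S0 > 0" and sg: "sg > 0" and B: "finite B" and pos: "\<And>b. b \<in> B \<Longrightarrow> s b > 0"
  shows "score S0 sg B D i s = (\<Sum>b\<in>B. gsc sg (zeta S0 D b) (s b) * (- (xvec b $ i) * zeta S0 D b))"
proof -
  have L: "(\<lambda>t. ln (joint_pdf S0 sg B (D + t *\<^sub>R axis i 1) s)) =
      (\<lambda>t. \<Sum>b\<in>B. ln (rice_pdf (zeta S0 (D + t *\<^sub>R axis i 1) b) sg (s b)))"
  proof
    fix t
    show "ln (joint_pdf S0 sg B (D + t *\<^sub>R axis i 1) s) =
      (\<Sum>b\<in>B. ln (rice_pdf (zeta S0 (D + t *\<^sub>R axis i 1) b) sg (s b)))"
      unfolding joint_pdf_def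
      by (rule ln_prod[OF B]) (use rice_pdf_pos[OF sg pos] in \<open>simp add: less_imp_neq[symmetric]\<close>)
  qed
  have d: "((\<lambda>t. ln (rice_pdf (zeta S0 (D + t *\<^sub>R axis i 1) b) sg (s b))) has_real_derivative
      gsc sg (zeta S0 D b) (s b) * (- (xvec b $ i) * zeta S0 D b)) (at 0)" if b: "b \<in> B" for b
  proof -
    have d1: "((\<lambda>w. ln (rice_pdf w sg (s b))) has_real_derivative gsc sg (zeta S0 D b) (s b))
        (at (zeta S0 (D + 0 *\<^sub>R axis i 1) b))"
      using lnpdf_deriv[OF sg pos[OF b], of "zeta S0 D b"] by simp
    have dg: "((\<lambda>t. zeta S0 (D + t *\<^sub>R axis i 1) b) has_real_derivative (- (xvec b $ i) * zeta S0 D b)) (at 0)"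
      unfolding zeta_shift
      by (auto intro!: derivative_eq_intros simp: zeta_def)
    show ?thesis by (rule DERIV_chain2[OF d1 dg])
  qed
  have "((\<lambda>t. \<Sum>b\<in>B. ln (rice_pdf (zeta S0 (D + t *\<^sub>R axis i 1) b) sg (s b))) has_real_derivative
      (\<Sum>b\<in>B. gsc sg (zeta S0 D b) (s b) * (- (xvec b $ i) * zeta S0 D b))) (at 0)"
    by (rule DERIV_sum) (rule d)
  thus ?thesis unfolding score_def L by (rule DERIV_imp_deriv)
qed

lemma score_zero:
  assumes b: "b \<in> B" and nb: "\<not> s b > 0" and B: "finite B"
  shows "joint_pdf S0 sg B D s = 0"
  unfolding joint_pdf_def using b nb B by (intro prod_zero) (auto simp: rice_pdf_def intro!: bexI[OF _ b])

definition Fd :: "real \<Rightarrow> real \<Rightarrow> real ^ 6 \<Rightarrow> real ^ 3 \<Rightarrow> real ^ 3 \<Rightarrow> real ^ 3 \<Rightarrow> real \<Rightarrow> real" where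
  "Fd S0 sg D b c d y = rice_pdf (zeta S0 D d) sg y * (if d = b then gsc sg (zeta S0 D d) y else 1)
      * (if d = c then gsc sg (zeta S0 D d) y else 1)"

lemma Fd_int:
  assumes S0: "S0 > 0" and sg: "sg > 0"
  shows "has_bochner_integral lborel (Fd S0 sg D b c d)
     (if d = b \<and> d = c then rice_fisher (zeta S0 D d) sg else if d = b \<or> d = c then 0 else 1)"
proof -
  have z: "zeta S0 D d \<ge> 0" using zeta_pos[OF S0] less_imp_le by blast
  show ?thesis
  proof (cases "d = b")
    case True
    show ?thesis
    proof (cases "d = c")
      case True
      thus ?thesis using \<open>d = b\<close> ggp_int[OF sg z] unfolding Fd_def[abs_def] by simp
    next
      case False
      thus ?thesis using \<open>d = b\<close> gp_int[OF sg z] unfolding Fd_def[abs_def] by simp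
    qed
  next
    case False
    show ?thesis
    proof (cases "d = c")
      case True
      thus ?thesis using \<open>d \<noteq> b\<close> gp_int[OF sg z] unfolding Fd_def[abs_def] by simp
    next
      case False
      thus ?thesis using \<open>d \<noteq> b\<close> rice_A[OF sg z] unfolding Fd_def[abs_def] by simp
    qed
  qed
qed

lemma prod_Fd:
  assumes B: "finite B" and b: "b \<in> B" and c: "c \<in> B"
  shows "(\<Prod>d\<in>B. Fd S0 sg D b c d (s d)) =
     joint_pdf S0 sg B D s * gsc sg (zeta S0 D b) (s b) * gsc sg (zeta S0 D c) (s c)"
proof -
  have "(\<Prod>d\<in>B. Fd S0 sg D b c d (s d)) =
     (\<Prod>d\<in>B. rice_pdf (zeta S0 D d) sg (s d)) * (\<Prod>d\<in>B. if d = b then gsc sg (zeta S0 D d) (s d) else 1)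
       * (\<Prod>d\<in>B. if d = c then gsc sg (zeta S0 D d) (s d) else 1)"
    unfolding Fd_def by (simp add: prod.distrib)
  also have "\<dots> = joint_pdf S0 sg B D s * gsc sg (zeta S0 D b) (s b) * gsc sg (zeta S0 D c) (s c)"
    unfolding joint_pdf_def using B b c by (simp add: prod.delta)
  finally show ?thesis .
qed

lemma integrand_eq:
  assumes S0: "S0 > 0" and sg: "sg > 0" and B: "finite B"
  shows "score S0 sg B D i s * score S0 sg B D j s * joint_pdf S0 sg B D s =
    (\<Sum>b\<in>B. \<Sum>c\<in>B. ((- (xvec b $ i) * zeta S0 D b) * (- (xvec c $ j) * zeta S0 D c)) *
        (\<Prod>d\<in>B. Fd S0 sg D b c d (s d)))"
proof -
  define G where "G b = gsc sg (zeta S0 D b) (s b)" for b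
  define a where "a b i = - (xvec b $ i) * zeta S0 D b" for b i
  have "(\<Sum>b\<in>B. \<Sum>c\<in>B. (a b i * a c j) * (\<Prod>d\<in>B. Fd S0 sg D b c d (s d))) =
     (\<Sum>b\<in>B. \<Sum>c\<in>B. (a b i * a c j) * (joint_pdf S0 sg B D s * G b * G c))"
    using B by (intro sum.cong refl) (simp add: prod_Fd G_def)
  also have "\<dots> = (\<Sum>b\<in>B. \<Sum>c\<in>B. (G b * a b i) * (G c * a c j) * joint_pdf S0 sg B D s)"
    by (intro sum.cong refl) (simp add: mult_ac)
  also have "\<dots> = (\<Sum>b\<in>B. G b * a b i) * (\<Sum>c\<in>B. G c * a c j) * joint_pdf S0 sg B D s"
  proof -
    have "(\<Sum>b\<in>B. G b * a b i) * (\<Sum>c\<in>B. G c * a c j) = (\<Sum>b\<in>B. \<Sum>c\<in>B. (G b * a b i) * (G c * a c j))"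
      by (rule sum_product)
    thus ?thesis by (simp add: sum_distrib_right)
  qed
  finally have rhs: "(\<Sum>b\<in>B. \<Sum>c\<in>B. (a b i * a c j) * (\<Prod>d\<in>B. Fd S0 sg D b c d (s d))) =
      (\<Sum>b\<in>B. G b * a b i) * (\<Sum>c\<in>B. G c * a c j) * joint_pdf S0 sg B D s" .
  show ?thesis
  proof (cases "\<forall>b\<in>B. s b > 0")
    case True
    hence "score S0 sg B D i s = (\<Sum>b\<in>B. G b * a b i)" "score S0 sg B D j s = (\<Sum>b\<in>B. G b * a b j)"
      using score_formula[OF S0 sg B] unfolding G_def a_def by auto
    thus ?thesis using rhs unfolding a_def by simp
  next
    case False
    then obtain b where "b \<in> B" "\<not> s b > 0" by auto
    hence "joint_pdf S0 sg B D s = 0" using score_zero B by blast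
    thus ?thesis using rhs unfolding a_def by simp
  qed
qed

lemma psf: "product_sigma_finite (\<lambda>_::real^3. lborel :: real measure)"
  unfolding product_sigma_finite_def by (simp add: lborel.sigma_finite_measure_axioms)

lemma prod_Fd_int:
  assumes S0: "S0 > 0" and sg: "sg > 0" and B: "finite B" and b: "b \<in> B" and c: "c \<in> B"
  shows "integrable (PiM B (\<lambda>_. lborel)) (\<lambda>s. \<Prod>d\<in>B. Fd S0 sg D b c d (s d))"
    and "(\<integral>s. (\<Prod>d\<in>B. Fd S0 sg D b c d (s d)) \<partial>PiM B (\<lambda>_. lborel)) =
          (if b = c then rice_fisher (zeta S0 D b) sg else 0)"
proof -
  interpret P: product_sigma_finite "\<lambda>_::real^3. lborel :: real measure" by (rule psf)
  have ii: "integrable lborel (Fd S0 sg D b c d)" for d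
    using Fd_int[OF S0 sg] by (rule integrable.intros)
  show "integrable (PiM B (\<lambda>_. lborel)) (\<lambda>s. \<Prod>d\<in>B. Fd S0 sg D b c d (s d))"
    by (rule P.product_integrable_prod[OF B ii])
  have "(\<integral>s. (\<Prod>d\<in>B. Fd S0 sg D b c d (s d)) \<partial>PiM B (\<lambda>_. lborel)) =
      (\<Prod>d\<in>B. integral\<^sup>L lborel (Fd S0 sg D b c d))"
    by (rule P.product_integral_prod[OF B ii])
  also have "\<dots> = (\<Prod>d\<in>B. (if d = b \<and> d = c then rice_fisher (zeta S0 D d) sg else if d = b \<or> d = c then 0 else 1))"
    by (intro prod.cong refl has_bochner_integral_integral_eq Fd_int[OF S0 sg])
  also have "\<dots> = (if b = c then rice_fisher (zeta S0 D b) sg else 0)"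
  proof (cases "b = c")
    case True
    have "(\<Prod>d\<in>B. (if d = b \<and> d = c then rice_fisher (zeta S0 D d) sg else if d = b \<or> d = c then 0 else 1))
        = (\<Prod>d\<in>B. (if d = b then rice_fisher (zeta S0 D d) sg else 1))"
      using True by (intro prod.cong refl) auto
    also have "\<dots> = rice_fisher (zeta S0 D b) sg" using B b by (simp add: prod.delta')
    finally show ?thesis using True by simp
  next
    case False
    have "(\<Prod>d\<in>B. (if d = b \<and> d = c then rice_fisher (zeta S0 D d) sg else if d = b \<or> d = c then 0 else 1)) = 0"
      using False B b by (intro prod_zero) (auto intro!: bexI[OF _ b])
    thus ?thesis using False by simp
  qed
  finally show "(\<integral>s. (\<Prod>d\<in>B. Fd S0 sg D b c d (s d)) \<partial>PiM B (\<lambda>_. lborel)) =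
          (if b = c then rice_fisher (zeta S0 D b) sg else 0)" .
qed

lemma entry:
  assumes S0: "S0 > 0" and sg: "sg > 0" and B: "finite B"
  shows "fisher_matrix S0 sg B D $ i $ j =
     (\<Sum>b\<in>B. rice_fisher (zeta S0 D b) sg * (zeta S0 D b)\<^sup>2 * (xvec b $ i * xvec b $ j))"
proof -
  define a where "a b i = - (xvec b $ i) * zeta S0 D b" for b i
  have "fisher_matrix S0 sg B D $ i $ j =
     (\<integral>s. score S0 sg B D i s * score S0 sg B D j s * joint_pdf S0 sg B D s \<partial>PiM B (\<lambda>_. lborel))"
    unfolding fisher_matrix_def by simp
  also have "\<dots> = (\<integral>s. (\<Sum>b\<in>B. \<Sum>c\<in>B. (a b i * a c j) * (\<Prod>d\<in>B. Fd S0 sg D b c d (s d))) \<partial>PiM B (\<lambda>_. lborel))"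
    unfolding integrand_eq[OF S0 sg B] a_def ..
  also have "\<dots> = (\<Sum>b\<in>B. \<Sum>c\<in>B. (a b i * a c j) * (if b = c then rice_fisher (zeta S0 D b) sg else 0))"
  proof (rule has_bochner_integral_integral_eq)
    have hb: "has_bochner_integral (PiM B (\<lambda>_. lborel)) (\<lambda>s. \<Prod>d\<in>B. Fd S0 sg D b c d (s d))
        (if b = c then rice_fisher (zeta S0 D b) sg else 0)" if "b \<in> B" "c \<in> B" for b c
      using has_bochner_integral_integrable[OF prod_Fd_int(1)[OF S0 sg B that]] prod_Fd_int(2)[OF S0 sg B that] by simp
    show "has_bochner_integral (PiM B (\<lambda>_. lborel))
        (\<lambda>s. \<Sum>b\<in>B. \<Sum>c\<in>B. (a b i * a c j) * (\<Prod>d\<in>B. Fd S0 sg D b c d (s d)))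
        (\<Sum>b\<in>B. \<Sum>c\<in>B. (a b i * a c j) * (if b = c then rice_fisher (zeta S0 D b) sg else 0))"
      apply (rule has_bochner_integral_sum)
      apply (rule has_bochner_integral_sum)
      apply (rule has_bochner_integral_mult_right)
      apply (rule hb)
      apply assumption+
      done
  qed
  also have "\<dots> = (\<Sum>b\<in>B. (a b i * a b j) * rice_fisher (zeta S0 D b) sg)"
  proof (intro sum.cong refl)
    fix b assume b: "b \<in> B"
    have "(\<Sum>c\<in>B. (a b i * a c j) * (if b = c then rice_fisher (zeta S0 D b) sg else 0)) =
        (\<Sum>c\<in>B. if c = b then (a b i * a b j) * rice_fisher (zeta S0 D b) sg else 0)"
      by (intro sum.cong refl) auto
    also have "\<dots> = (a b i * a b j) * rice_fisher (zeta S0 D b) sg" using B b by (simp add: sum.delta')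
    finally show "(\<Sum>c\<in>B. (a b i * a c j) * (if b = c then rice_fisher (zeta S0 D b) sg else 0)) =
        (a b i * a b j) * rice_fisher (zeta S0 D b) sg" .
  qed
  also have "\<dots> = (\<Sum>b\<in>B. rice_fisher (zeta S0 D b) sg * (zeta S0 D b)\<^sup>2 * (xvec b $ i * xvec b $ j))"
    by (intro sum.cong refl) (simp add: a_def power2_eq_square mult_ac)
  finally show ?thesis .
qed


theorem proposition5:
  fixes S0 sg :: real and B :: "(real ^ 3) set" and D0 :: "real ^ 6"
  assumes "S0 > 0" and "sg > 0" and "finite B" and "\<forall>b\<in>B. norm b = 1"
  shows "fisher_matrix S0 sg B D0 =
           (\<Sum>b\<in>B. (rice_fisher (zeta S0 D0 b) sg * (zeta S0 D0 b)\<^sup>2) *\<^sub>R outer (xvec b))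
       \<and> (\<forall>z\<ge>0. rice_fisher z sg =
           1 / sg\<^sup>2 * (exp (- z\<^sup>2 / (2 * sg\<^sup>2)) * Vfun (z / sg) - z\<^sup>2 / sg\<^sup>2))
       \<and> (\<forall>w>0. Vfun w = 1 / w ^ 4 *
           (LBINT v:{0<..}. v ^ 3 * (besselI 1 v)\<^sup>2 / besselI 0 v * exp (- v\<^sup>2 / (2 * w\<^sup>2))))"
proof (intro conjI allI impI)
  show "fisher_matrix S0 sg B D0 =
      (\<Sum>b\<in>B. (rice_fisher (zeta S0 D0 b) sg * (zeta S0 D0 b)\<^sup>2) *\<^sub>R outer (xvec b))"
    unfolding vec_eq_iff by (simp add: entry[OF assms(1,2,3)] outer_def)
next
  fix z :: real assume "z \<ge> 0"
  thus "rice_fisher z sg = 1 / sg\<^sup>2 * (exp (- z\<^sup>2 / (2 * sg\<^sup>2)) * Vfun (z / sg) - z\<^sup>2 / sg\<^sup>2)"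
    by (rule fisher_formula[OF assms(2)])
next
  fix w :: real assume "w > 0"
  thus "Vfun w = 1 / w ^ 4 *
           (LBINT v:{0<..}. v ^ 3 * (besselI 1 v)\<^sup>2 / besselI 0 v * exp (- v\<^sup>2 / (2 * w\<^sup>2)))"
    by (rule Vfun_subst)
qed

end
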